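(* Let $G$ be a finite simple graph with edge weight function $w$ and vertex weight function $w_1$, let $\theta$ be a real number, and let $u$ be a $(\theta,w,w_1)$-special vertex of $G$. Then the degree of $u$ is at least two.
   Context: An edge weight function $w$ assigns a nonzero complex number to each edge; a vertex weight function $w_1$ assigns a real number (possibly $0$) to each vertex; subgraphs carry restricted weights; $G\setminus u$ deletes $u$ and its incident edges. For $A\subseteq E(G)$, $w(A)=\prod_{e\in A}w(e)$. $\mu_w(G,x)=\sum_{M}(-1)^{|M|}|w(M)|^2x^{n-2|M|}$ over all matchings $M$ (including empty). $\eta_{(w,w_1)}(G,x)=\sum_{S\subseteq V(G)}(-1)^{|V(G)\setminus S|}\big(\prod_{y\in V(G)\setminus S}w_1(y)\big)\mu_w(G[S],x)$ with $G[S]$ the induced subgraph; $\mu_w,\eta_{(w,w_1)}$ of the empty graph equal $1$. $\mathrm{mult}(\theta,H)$ is the multiplicity of $\theta$ as a root of $\eta_{(w,w_1)}(H,x)$ ($0$ if not a root). A vertex $v$ of $H$ is $(\theta,w,w_1)$-essential if $\mathrm{mult}(\theta,H\setminus v)=\mathrm{mult}(\theta,H)-1$; $v$ is $(\theta,w,w_1)$-special if it is not essential but is adjacent to some essential vertex. *)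

theory Defs
  imports Complex_Main "HOL-Computational_Algebra.Polynomial"
begin

definition simple_graph :: "'a set \<Rightarrow> 'a set set \<Rightarrow> bool" where
  "simple_graph V E \<longleftrightarrow> finite V \<and>
     (\<forall>e\<in>E. \<exists>x y. x \<noteq> y \<and> x \<in> V \<and> y \<in> V \<and> e = {x, y})"

definition matchings :: "'a set set \<Rightarrow> 'a set set set" where
  "matchings E = {M. M \<subseteq> E \<and> (\<forall>e\<in>M. \<forall>f\<in>M. e \<noteq> f \<longrightarrow> e \<inter> f = {})}"

definition induced_edges :: "'a set set \<Rightarrow> 'a set \<Rightarrow> 'a set set" where
  "induced_edges E S = {e\<in>E. e \<subseteq> S}"

definition mu_w :: "('a set \<Rightarrow> complex) \<Rightarrow> 'a set \<Rightarrow> 'a set set \<Rightarrow> real poly" where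
  "mu_w w V E = (\<Sum>M\<in>matchings E.
     monom ((-1) ^ card M * (\<Prod>e\<in>M. (cmod (w e))\<^sup>2)) (card V - 2 * card M))"

definition eta :: "('a set \<Rightarrow> complex) \<Rightarrow> ('a \<Rightarrow> real) \<Rightarrow> 'a set \<Rightarrow> 'a set set \<Rightarrow> real poly" where
  "eta w w1 V E = (\<Sum>S\<in>Pow V.
     smult ((-1) ^ card (V - S) * (\<Prod>y\<in>V - S. w1 y)) (mu_w w S (induced_edges E S)))"

definition mult :: "('a set \<Rightarrow> complex) \<Rightarrow> ('a \<Rightarrow> real) \<Rightarrow> real \<Rightarrow> 'a set \<Rightarrow> 'a set set \<Rightarrow> nat" where
  "mult w w1 \<theta> V E = order \<theta> (eta w w1 V E)"

definition del_vertices :: "'a set \<Rightarrow> 'a \<Rightarrow> 'a set" where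
  "del_vertices V u = V - {u}"

definition del_edges :: "'a set set \<Rightarrow> 'a \<Rightarrow> 'a set set" where
  "del_edges E u = {e\<in>E. u \<notin> e}"

definition essential :: "('a set \<Rightarrow> complex) \<Rightarrow> ('a \<Rightarrow> real) \<Rightarrow> real \<Rightarrow> 'a set \<Rightarrow> 'a set set \<Rightarrow> 'a \<Rightarrow> bool" where
  "essential w w1 \<theta> V E v \<longleftrightarrow> v \<in> V \<and>
     int (mult w w1 \<theta> (del_vertices V v) (del_edges E v)) = int (mult w w1 \<theta> V E) - 1"

definition special :: "('a set \<Rightarrow> complex) \<Rightarrow> ('a \<Rightarrow> real) \<Rightarrow> real \<Rightarrow> 'a set \<Rightarrow> 'a set set \<Rightarrow> 'a \<Rightarrow> bool" where
  "special w w1 \<theta> V E v \<longleftrightarrow> v \<in> V \<and> \<not> essential w w1 \<theta> V E v \<and>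
     (\<exists>x. {v, x} \<in> E \<and> essential w w1 \<theta> V E x)"

definition degree :: "'a set set \<Rightarrow> 'a \<Rightarrow> nat" where
  "degree E v = card {e\<in>E. v \<in> e}"

end

theory Submission
  imports Defs
begin

lemma smult_sum2: "smult c (\<Sum>x\<in>A. f x) = (\<Sum>x\<in>A. smult c (f x))"
  by (induction A rule: infinite_finite_induct) (simp_all add: smult_add_right)

lemma match_card:
  assumes E2: "\<forall>e\<in>E. \<exists>x y. x \<noteq> y \<and> e = {x,y}" and fin: "finite T"
    and M: "M \<in> matchings (induced_edges E T)"
  shows "2 * card M \<le> card T"
proof -
  have sub: "M \<subseteq> Pow T" and ME: "M \<subseteq> E"
    and disj: "\<forall>e\<in>M. \<forall>f\<in>M. e \<noteq> f \<longrightarrow> e \<inter> f = {}"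
    using M by (auto simp: matchings_def induced_edges_def)
  have finM: "finite M" using finite_subset[OF sub] fin by auto
  have c2: "\<forall>e\<in>M. card e = 2" using ME E2 by fastforce
  have fe: "\<forall>e\<in>M. finite e" using ME E2 by fastforce
  have "card (\<Union>M) = sum card M"
    by (rule card_Union_disjoint) (use disj fe in \<open>auto simp: pairwise_def disjnt_def\<close>)
  also have "\<dots> = 2 * card M" using c2 by simp
  finally have "card (\<Union>M) = 2 * card M" .
  moreover have "card (\<Union>M) \<le> card T" using sub fin by (intro card_mono) auto
  ultimately show ?thesis by simp
qed

lemma mu_rec:
  assumes E2: "\<forall>e\<in>E. \<exists>x y. x \<noteq> y \<and> e = {x,y}" and fin: "finite T" and u: "u \<in> T"
  shows "mu_w w T (induced_edges E T) = [:0,1:] * mu_w w (T - {u}) (induced_edges E (T - {u}))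
     - (\<Sum>v\<in>{v\<in>T. {u,v}\<in>E}. smult ((cmod (w {u,v}))^2)
          (mu_w w (T - {u} - {v}) (induced_edges E (T - {u} - {v}))))"
proof -
  define f where "f = (\<lambda>(S::'a set) M. monom ((-1) ^ card M * (\<Prod>e\<in>M. (cmod (w e))\<^sup>2)) (card S - 2 * card M) :: real poly)"
  define MT where "MT = matchings (induced_edges E T)"
  define A where "A = {M\<in>MT. u \<notin> \<Union>M}"
  define B where "B = {M\<in>MT. u \<in> \<Union>M}"
  define N where "N = {v\<in>T. {u,v}\<in>E}"
  define MV where "MV = (\<lambda>v. matchings (induced_edges E (T - {u} - {v})))"
  have muf: "\<And>S. mu_w w S (induced_edges E S) = sum (f S) (matchings (induced_edges E S))"
    by (simp add: mu_w_def f_def)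
  have finMT: "finite MT"
  proof -
    have "MT \<subseteq> Pow (Pow T)" by (auto simp: MT_def matchings_def induced_edges_def)
    then show ?thesis using fin finite_subset by blast
  qed
  have MTAB: "MT = A \<union> B" "A \<inter> B = {}" by (auto simp: A_def B_def)
  have Aeq: "A = matchings (induced_edges E (T - {u}))"
    by (auto simp: A_def MT_def matchings_def induced_edges_def)
  have sumA: "sum (f T) A = [:0,1:] * mu_w w (T - {u}) (induced_edges E (T - {u}))"
  proof -
    have "sum (f T) A = sum (\<lambda>M. [:0,1:] * f (T - {u}) M) A"
    proof (rule sum.cong[OF refl])
      fix M assume "M \<in> A"
      then have "2 * card M \<le> card (T - {u})" using match_card[OF E2, of "T - {u}"] fin Aeq by auto
      moreover have "card (T - {u}) = card T - 1" using u fin by simp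
      moreover have "card T \<noteq> 0" using u fin by auto
      ultimately have "card T - 2 * card M = Suc (card (T - {u}) - 2 * card M)" by linarith
      then show "f T M = [:0,1:] * f (T - {u}) M"
        by (simp add: f_def monom_Suc)
    qed
    also have "\<dots> = [:0,1:] * sum (f (T - {u})) A" by (simp add: sum_distrib_left)
    finally show ?thesis using Aeq muf by simp
  qed
  have notu: "\<And>v. {u,v} \<in> E \<Longrightarrow> v \<noteq> u"
    using E2 by (metis doubleton_eq_iff insert_absorb2)
  have Beq: "B = (\<Union>v\<in>N. insert {u,v} ` MV v)"
  proof
    show "B \<subseteq> (\<Union>v\<in>N. insert {u,v} ` MV v)"
    proof
      fix M assume MB: "M \<in> B"
      then obtain e where e: "e \<in> M" "u \<in> e" by (auto simp: B_def)
      have ME: "M \<subseteq> E" "\<forall>e\<in>M. e \<subseteq> T" and disj: "\<forall>e\<in>M. \<forall>f\<in>M. e \<noteq> f \<longrightarrow> e \<inter> f = {}"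
        using MB by (auto simp: B_def MT_def matchings_def induced_edges_def)
      have eE: "e \<in> E" using ME e by auto
      then obtain x y where xy: "x \<noteq> y" "e = {x,y}" using E2 by blast
      obtain v where v: "e = {u,v}"
      proof (cases "u = x")
        case True then show ?thesis using that[of y] xy by simp
      next
        case False then have "u = y" using e xy by auto
        then show ?thesis using that[of x] xy by (simp add: insert_commute)
      qed
      have vN: "v \<in> N" using v e ME by (auto simp: N_def)
      have "M - {e} \<in> MV v"
      proof -
        have "\<forall>f\<in>M - {e}. f \<subseteq> T - {u} - {v}"
        proof
          fix f assume f: "f \<in> M - {e}"
          then have "f \<inter> e = {}" using disj e by auto
          then show "f \<subseteq> T - {u} - {v}" using ME f v by auto
        qed
        then show ?thesis using ME disj by (auto simp: MV_def matchings_def induced_edges_def)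
      qed
      moreover have "M = insert {u,v} (M - {e})" using e v by auto
      ultimately show "M \<in> (\<Union>v\<in>N. insert {u,v} ` MV v)" using vN by blast
    qed
  next
    show "(\<Union>v\<in>N. insert {u,v} ` MV v) \<subseteq> B"
    proof
      fix M assume "M \<in> (\<Union>v\<in>N. insert {u,v} ` MV v)"
      then obtain v M' where v: "v \<in> N" and M': "M' \<in> MV v" and M: "M = insert {u,v} M'" by blast
      have sub: "\<forall>f\<in>M'. f \<subseteq> T - {u} - {v}" and ME: "M' \<subseteq> E" and disj: "\<forall>e\<in>M'. \<forall>f\<in>M'. e \<noteq> f \<longrightarrow> e \<inter> f = {}"
        using M' by (auto simp: MV_def matchings_def induced_edges_def)
      have vE: "{u,v} \<in> E" "v \<in> T" using v by (auto simp: N_def)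
      have "M \<subseteq> E" using ME vE M by auto
      moreover have "\<forall>e\<in>M. e \<subseteq> T" using sub vE u M by auto
      moreover have "\<forall>e\<in>M. \<forall>f\<in>M. e \<noteq> f \<longrightarrow> e \<inter> f = {}"
      proof (intro ballI impI)
        fix e f assume e: "e \<in> M" and f: "f \<in> M" and ef: "e \<noteq> f"
        show "e \<inter> f = {}"
        proof (cases "e = {u,v}")
          case True
          then have "f \<in> M'" using f ef M by auto
          then show ?thesis using sub True by blast
        next
          case False
          then have e': "e \<in> M'" using e M by auto
          show ?thesis
          proof (cases "f = {u,v}")
            case True then show ?thesis using sub e' by blast
          next
            case False then have "f \<in> M'" using f M by auto
            then show ?thesis using disj e' ef by blast
          qed
        qed
      qed
      ultimately have "M \<in> MT" by (auto simp: MT_def matchings_def induced_edges_def)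
      moreover have "u \<in> \<Union>M" using M by auto
      ultimately show "M \<in> B" by (simp add: B_def)
    qed
  qed
  have finMV: "\<And>v. finite (MV v)"
  proof -
    fix v
    have "MV v \<subseteq> Pow (Pow T)" by (auto simp: MV_def matchings_def induced_edges_def)
    then show "finite (MV v)" using fin finite_subset by blast
  qed
  have notin: "\<And>v M'. v \<in> N \<Longrightarrow> M' \<in> MV v \<Longrightarrow> {u,v} \<notin> M'"
    by (auto simp: MV_def matchings_def induced_edges_def)
  have finN: "finite N" using fin by (simp add: N_def)
  have sumB: "sum (f T) B = (\<Sum>v\<in>N. sum (f T) (insert {u,v} ` MV v))"
    unfolding Beq
  proof (rule sum.UNION_disjoint[OF finN])
    show "\<forall>i\<in>N. finite (insert {u, i} ` MV i)" using finMV by auto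
    show "\<forall>i\<in>N. \<forall>j\<in>N. i \<noteq> j \<longrightarrow> insert {u, i} ` MV i \<inter> insert {u, j} ` MV j = {}"
    proof (intro ballI impI)
      fix i j assume i: "i \<in> N" and j: "j \<in> N" and ij: "i \<noteq> j"
      show "insert {u, i} ` MV i \<inter> insert {u, j} ` MV j = {}"
      proof (rule ccontr)
        assume "insert {u, i} ` MV i \<inter> insert {u, j} ` MV j \<noteq> {}"
        then obtain M1 M2 where M1: "M1 \<in> MV i" and M2: "M2 \<in> MV j" and eq: "insert {u,i} M1 = insert {u,j} M2" by blast
        then have "{u,i} \<in> insert {u,j} M2" by auto
        moreover have "{u,i} \<noteq> {u,j}" using ij by (auto simp: doubleton_eq_iff)
        ultimately have "{u,i} \<in> M2" by auto
        then show False using M2 by (auto simp: MV_def matchings_def induced_edges_def)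
      qed
    qed
  qed
  have sumB2: "\<And>v. v \<in> N \<Longrightarrow> sum (f T) (insert {u,v} ` MV v) =
      - smult ((cmod (w {u,v}))^2) (mu_w w (T - {u} - {v}) (induced_edges E (T - {u} - {v})))"
  proof -
    fix v assume v: "v \<in> N"
    have inj: "inj_on (insert {u,v}) (MV v)"
    proof (rule inj_onI)
      fix X Y assume X: "X \<in> MV v" and Y: "Y \<in> MV v" and eq: "insert {u,v} X = insert {u,v} Y"
      show "X = Y" using insert_ident[OF notin[OF v X] notin[OF v Y]] eq by simp
    qed
    have "sum (f T) (insert {u,v} ` MV v) = sum (f T \<circ> insert {u,v}) (MV v)"
      by (rule sum.reindex[OF inj])
    also have "\<dots> = sum (\<lambda>M'. - smult ((cmod (w {u,v}))^2) (f (T - {u} - {v}) M')) (MV v)"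
    proof (rule sum.cong[OF refl])
      fix M' assume M': "M' \<in> MV v"
      have finM': "finite M'"
      proof -
        have "M' \<subseteq> Pow T" using M' by (auto simp: MV_def matchings_def induced_edges_def)
        then show ?thesis using fin finite_subset by blast
      qed
      have vu: "v \<noteq> u" "v \<in> T" using v notu by (auto simp: N_def)
      have cT: "card (T - {u} - {v}) = card T - 2" using vu u fin by simp
      have "2 * card M' \<le> card (T - {u} - {v})" using match_card[OF E2, of "T - {u} - {v}" M'] fin M'
        by (simp add: MV_def)
      then have ex: "card T - 2 * Suc (card M') = card (T - {u} - {v}) - 2 * card M'" using cT by simp
      show "(f T \<circ> insert {u,v}) M' = - smult ((cmod (w {u,v}))^2) (f (T - {u} - {v}) M')"
        using notin[OF v M'] finM' ex by (simp add: f_def smult_monom minus_monom)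
    qed
    also have "\<dots> = - smult ((cmod (w {u,v}))^2) (sum (f (T - {u} - {v})) (MV v))"
      by (simp add: sum_negf smult_sum2)
    finally show "sum (f T) (insert {u,v} ` MV v) =
      - smult ((cmod (w {u,v}))^2) (mu_w w (T - {u} - {v}) (induced_edges E (T - {u} - {v})))"
      using muf MV_def by simp
  qed
  have "mu_w w T (induced_edges E T) = sum (f T) A + sum (f T) B"
    using muf[of T] MTAB finMT by (simp add: MT_def[symmetric] sum.union_disjoint)
  also have "\<dots> = [:0,1:] * mu_w w (T - {u}) (induced_edges E (T - {u}))
     - (\<Sum>v\<in>N. smult ((cmod (w {u,v}))^2) (mu_w w (T - {u} - {v}) (induced_edges E (T - {u} - {v}))))"
    using sumA sumB sumB2 by (simp add: sum_negf)
  finally show ?thesis by (simp add: N_def)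
qed


lemma eta_rec:
  assumes E2: "\<forall>e\<in>E. \<exists>x y. x \<noteq> y \<and> e = {x,y}" and fin: "finite S" and u: "u \<in> S"
  shows "eta w w1 S E = [:- w1 u, 1:] * eta w w1 (S - {u}) E
     - (\<Sum>v\<in>{v\<in>S. {u,v}\<in>E}. smult ((cmod (w {u,v}))^2) (eta w w1 (S - {u} - {v}) E))"
proof -
  define kk where "kk = (\<lambda>R::'a set. (-1::real) ^ card R * (\<Prod>y\<in>R. w1 y))"
  define mu where "mu = (\<lambda>T. mu_w w T (induced_edges E T))"
  define c where "c = (\<lambda>v. (cmod (w {u,v}))^2)"
  define S' where "S' = S - {u}"
  have etaf: "\<And>X. eta w w1 X E = (\<Sum>T\<in>Pow X. smult (kk (X - T)) (mu T))"
    by (simp add: eta_def kk_def mu_def)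
  have notu: "\<And>v. {u,v} \<in> E \<Longrightarrow> v \<noteq> u"
    using E2 by (metis doubleton_eq_iff insert_absorb2)
  have finS': "finite S'" using fin by (simp add: S'_def)
  have uS': "u \<notin> S'" by (simp add: S'_def)
  have Sins: "S = insert u S'" using u by (auto simp: S'_def)
  have kkins: "\<And>R. finite R \<Longrightarrow> u \<notin> R \<Longrightarrow> kk (insert u R) = - w1 u * kk R"
    by (simp add: kk_def)
  have PowS: "Pow S = Pow S' \<union> insert u ` Pow S'" using Pow_insert[of u S'] Sins by simp
  have disj: "Pow S' \<inter> insert u ` Pow S' = {}" using uS' by auto
  have inj: "inj_on (insert u) (Pow S')"
  proof (rule inj_onI)
    fix X Y assume X: "X \<in> Pow S'" and Y: "Y \<in> Pow S'" and eq: "insert u X = insert u Y"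
    have "u \<notin> X" "u \<notin> Y" using X Y uS' by auto
    then show "X = Y" using insert_ident eq by metis
  qed
  have part1: "(\<Sum>T\<in>Pow S'. smult (kk (S - T)) (mu T)) = smult (- w1 u) (eta w w1 S' E)"
  proof -
    have "(\<Sum>T\<in>Pow S'. smult (kk (S - T)) (mu T)) = (\<Sum>T\<in>Pow S'. smult (- w1 u) (smult (kk (S' - T)) (mu T)))"
    proof (rule sum.cong[OF refl])
      fix T assume T: "T \<in> Pow S'"
      have "S - T = insert u (S' - T)" using T Sins uS' by auto
      then have "kk (S - T) = - w1 u * kk (S' - T)" using kkins finS' uS' by simp
      then show "smult (kk (S - T)) (mu T) = smult (- w1 u) (smult (kk (S' - T)) (mu T))" by simp
    qed
    also have "\<dots> = smult (- w1 u) (eta w w1 S' E)" by (simp add: etaf smult_sum2)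
    finally show ?thesis .
  qed
  define N where "N = {v\<in>S'. {u,v}\<in>E}"
  have NS: "{v\<in>S. {u,v}\<in>E} = N" using notu by (auto simp: N_def S'_def)
  have finN: "finite N" using finS' by (simp add: N_def)
  have mu_ins: "\<And>T. T \<in> Pow S' \<Longrightarrow> mu (insert u T) = [:0,1:] * mu T
        - (\<Sum>v\<in>{v\<in>T. {u,v}\<in>E}. smult (c v) (mu (T - {v})))"
  proof -
    fix T assume T: "T \<in> Pow S'"
    have finT: "finite (insert u T)" using T finS' finite_subset by auto
    have uT: "u \<notin> T" using T uS' by auto
    have e1: "insert u T - {u} = T" using uT by auto
    have e2: "{v\<in>insert u T. {u,v}\<in>E} = {v\<in>T. {u,v}\<in>E}" using notu by auto
    show "mu (insert u T) = [:0,1:] * mu T - (\<Sum>v\<in>{v\<in>T. {u,v}\<in>E}. smult (c v) (mu (T - {v})))"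
      using mu_rec[OF E2 finT, of u w] unfolding e1 e2 by (simp add: mu_def c_def)
  qed
  have part2: "(\<Sum>T\<in>insert u ` Pow S'. smult (kk (S - T)) (mu T)) =
      [:0,1:] * eta w w1 S' E - (\<Sum>v\<in>N. smult (c v) (eta w w1 (S' - {v}) E))"
  proof -
    have "(\<Sum>T\<in>insert u ` Pow S'. smult (kk (S - T)) (mu T))
        = (\<Sum>T\<in>Pow S'. smult (kk (S' - T)) (mu (insert u T)))"
    proof -
      have "(\<Sum>T\<in>insert u ` Pow S'. smult (kk (S - T)) (mu T))
          = (\<Sum>T\<in>Pow S'. smult (kk (S - insert u T)) (mu (insert u T)))"
        by (simp add: sum.reindex[OF inj])
      also have "\<dots> = (\<Sum>T\<in>Pow S'. smult (kk (S' - T)) (mu (insert u T)))"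
        by (rule sum.cong[OF refl]) (simp add: Sins Diff_insert0 uS')
      finally show ?thesis .
    qed
    also have "\<dots> = (\<Sum>T\<in>Pow S'. [:0,1:] * smult (kk (S' - T)) (mu T))
        - (\<Sum>T\<in>Pow S'. \<Sum>v\<in>{v\<in>N. v \<in> T}. smult (kk (S' - T) * c v) (mu (T - {v})))"
    proof -
      have "\<And>T. T \<in> Pow S' \<Longrightarrow> smult (kk (S' - T)) (mu (insert u T)) =
           [:0,1:] * smult (kk (S' - T)) (mu T)
           - (\<Sum>v\<in>{v\<in>N. v \<in> T}. smult (kk (S' - T) * c v) (mu (T - {v})))"
      proof -
        fix T assume T: "T \<in> Pow S'"
        have "{v\<in>N. v \<in> T} = {v\<in>T. {u,v}\<in>E}" using T by (auto simp: N_def)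
        then show "smult (kk (S' - T)) (mu (insert u T)) =
           [:0,1:] * smult (kk (S' - T)) (mu T)
           - (\<Sum>v\<in>{v\<in>N. v \<in> T}. smult (kk (S' - T) * c v) (mu (T - {v})))"
          using mu_ins[OF T] by (simp add: smult_diff_right smult_sum2)
      qed
      then show ?thesis by (simp add: sum_subtractf)
    qed
    also have "(\<Sum>T\<in>Pow S'. [:0,1:] * smult (kk (S' - T)) (mu T)) = [:0,1:] * eta w w1 S' E"
      by (simp add: etaf sum_distrib_left)
    also have "(\<Sum>T\<in>Pow S'. \<Sum>v\<in>{v\<in>N. v \<in> T}. smult (kk (S' - T) * c v) (mu (T - {v})))
        = (\<Sum>v\<in>N. \<Sum>T\<in>{T\<in>Pow S'. v \<in> T}. smult (kk (S' - T) * c v) (mu (T - {v})))"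
      by (rule sum.swap_restrict) (use finS' finN in auto)
    also have "\<dots> = (\<Sum>v\<in>N. smult (c v) (eta w w1 (S' - {v}) E))"
    proof (rule sum.cong[OF refl])
      fix v assume v: "v \<in> N"
      have injv: "inj_on (insert v) (Pow (S' - {v}))"
      proof (rule inj_onI)
        fix X Y assume X: "X \<in> Pow (S' - {v})" and Y: "Y \<in> Pow (S' - {v})" and eq: "insert v X = insert v Y"
        have "v \<notin> X" "v \<notin> Y" using X Y by auto
        then show "X = Y" using insert_ident eq by metis
      qed
      have img: "{T\<in>Pow S'. v \<in> T} = insert v ` Pow (S' - {v})"
      proof
        show "{T \<in> Pow S'. v \<in> T} \<subseteq> insert v ` Pow (S' - {v})"
        proof
          fix T assume "T \<in> {T \<in> Pow S'. v \<in> T}"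
          then have "T = insert v (T - {v})" "T - {v} \<in> Pow (S' - {v})" by auto
          then show "T \<in> insert v ` Pow (S' - {v})" by blast
        qed
        show "insert v ` Pow (S' - {v}) \<subseteq> {T \<in> Pow S'. v \<in> T}" using v by (auto simp: N_def)
      qed
      have "(\<Sum>T\<in>{T\<in>Pow S'. v \<in> T}. smult (kk (S' - T) * c v) (mu (T - {v})))
          = (\<Sum>T\<in>Pow (S' - {v}). smult (kk (S' - insert v T) * c v) (mu (insert v T - {v})))"
        unfolding img by (simp add: sum.reindex[OF injv])
      also have "\<dots> = (\<Sum>T\<in>Pow (S' - {v}). smult (c v) (smult (kk ((S' - {v}) - T)) (mu T)))"
      proof (rule sum.cong[OF refl])
        fix T assume T: "T \<in> Pow (S' - {v})"
        have "S' - insert v T = (S' - {v}) - T" by auto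
        moreover have "insert v T - {v} = T" using T by auto
        ultimately show "smult (kk (S' - insert v T) * c v) (mu (insert v T - {v}))
            = smult (c v) (smult (kk ((S' - {v}) - T)) (mu T))" by (simp add: mult.commute)
      qed
      also have "\<dots> = smult (c v) (eta w w1 (S' - {v}) E)" by (simp add: etaf smult_sum2)
      finally show "(\<Sum>T\<in>{T\<in>Pow S'. v \<in> T}. smult (kk (S' - T) * c v) (mu (T - {v})))
          = smult (c v) (eta w w1 (S' - {v}) E)" .
    qed
    finally show ?thesis .
  qed
  have "eta w w1 S E = (\<Sum>T\<in>Pow S'. smult (kk (S - T)) (mu T)) + (\<Sum>T\<in>insert u ` Pow S'. smult (kk (S - T)) (mu T))"
    unfolding etaf[of S] PowS by (rule sum.union_disjoint) (use finS' disj in auto)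
  also have "\<dots> = smult (- w1 u) (eta w w1 S' E) + [:0,1:] * eta w w1 S' E
        - (\<Sum>v\<in>N. smult (c v) (eta w w1 (S' - {v}) E))"
    using part1 part2 by simp
  also have "\<dots> = [:- w1 u, 1:] * eta w w1 S' E - (\<Sum>v\<in>N. smult (c v) (eta w w1 (S' - {v}) E))"
    by simp
  finally show ?thesis using NS by (simp add: S'_def c_def)
qed


lemma eta_monic:
  assumes E2: "\<forall>e\<in>E. \<exists>x y. x \<noteq> y \<and> e = {x,y}" and fin: "finite S"
  shows "Polynomial.degree (eta w w1 S E) \<le> card S \<and> coeff (eta w w1 S E) (card S) = 1"
  using fin
proof (induction "card S" arbitrary: S rule: less_induct)
  case less
  show ?case
  proof (cases "S = {}")
    case True
    have "induced_edges E {} = {}" using E2 by (auto simp: induced_edges_def)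
    moreover have "matchings ({}::'a set set) = {{}}" by (auto simp: matchings_def)
    ultimately have "eta w w1 S E = 1" using True by (simp add: eta_def mu_w_def)
    then show ?thesis using True by simp
  next
    case False
    then obtain u where u: "u \<in> S" by blast
    define n where "n = card S"
    have "card S \<noteq> 0" using u less.prems by auto
    then have n1: "n \<ge> 1" by (simp add: n_def)
    have cS': "card (S - {u}) = n - 1" using u less.prems n_def by simp
    have IH1: "Polynomial.degree (eta w w1 (S - {u}) E) \<le> n - 1 \<and> coeff (eta w w1 (S - {u}) E) (n - 1) = 1"
      using less.hyps[of "S - {u}"] cS' n1 less.prems by (simp add: n_def)
    define N where "N = {v\<in>S. {u,v}\<in>E}"
    have notu: "\<And>v. {u,v} \<in> E \<Longrightarrow> v \<noteq> u"
      using E2 by (metis doubleton_eq_iff insert_absorb2)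
    have degv: "\<And>v. v \<in> N \<Longrightarrow> Polynomial.degree (smult ((cmod (w {u,v}))^2) (eta w w1 (S - {u} - {v}) E)) < n"
    proof -
      fix v assume v: "v \<in> N"
      then have "v \<in> S" "v \<noteq> u" using notu by (auto simp: N_def)
      then have c: "card (S - {u} - {v}) = n - 2" using u less.prems n_def by simp
      have "Polynomial.degree (eta w w1 (S - {u} - {v}) E) \<le> n - 2"
        using less.hyps[of "S - {u} - {v}"] c n1 less.prems by (simp add: n_def)
      then show "Polynomial.degree (smult ((cmod (w {u,v}))^2) (eta w w1 (S - {u} - {v}) E)) < n"
        using n1 degree_smult_le[of "(cmod (w {u,v}))^2" "eta w w1 (S - {u} - {v}) E"] by linarith
    qed
    define Sm where "Sm = (\<Sum>v\<in>N. smult ((cmod (w {u,v}))^2) (eta w w1 (S - {u} - {v}) E))"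
    have finN: "finite N" using less.prems by (simp add: N_def)
    have dSm: "Polynomial.degree Sm \<le> n" unfolding Sm_def
      by (rule degree_sum_le[OF finN]) (use degv in fastforce)
    have cSm: "coeff Sm n = 0" unfolding Sm_def coeff_sum
      by (rule sum.neutral) (use degv coeff_eq_0 in blast)
    define q where "q = eta w w1 (S - {u}) E"
    have rec: "eta w w1 S E = [:- w1 u, 1:] * q - Sm"
      using eta_rec[OF E2 less.prems u] by (simp add: q_def Sm_def N_def)
    have IHq: "Polynomial.degree q \<le> n - 1" using IH1 by (simp add: q_def)
    have "Polynomial.degree ([:- w1 u, 1:] * q) \<le> Polynomial.degree [:- w1 u, 1:] + Polynomial.degree q"
      by (rule degree_mult_le)
    moreover have "Polynomial.degree [:- w1 u, 1:] = 1" by simp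
    ultimately have dLq: "Polynomial.degree ([:- w1 u, 1:] * q) \<le> n" using IHq n1 by linarith
    have cq: "coeff q n = 0" using IHq n1 by (intro coeff_eq_0) linarith
    have cLq: "coeff ([:- w1 u, 1:] * q) n = 1"
    proof -
      have nS: "n = Suc (n - 1)" using n1 by simp
      have "coeff ([:- w1 u, 1:] * q) (Suc (n - 1)) = - w1 u * coeff q (Suc (n - 1)) + coeff q (n - 1)"
        by simp
      then have "coeff ([:- w1 u, 1:] * q) n = - w1 u * coeff q n + coeff q (n - 1)"
        using nS by simp
      then show ?thesis using cq IH1 by (simp add: q_def)
    qed
    show ?thesis using rec dLq dSm cLq cSm degree_diff_le by (simp add: n_def[symmetric])
  qed
qed

lemma eta_nonzero:
  assumes E2: "\<forall>e\<in>E. \<exists>x y. x \<noteq> y \<and> e = {x,y}" and fin: "finite S"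
  shows "eta w w1 S E \<noteq> 0"
  using eta_monic[OF E2 fin, of w w1] by auto

lemma pderiv_sum': "pderiv (\<Sum>x\<in>A. f x) = (\<Sum>x\<in>A. pderiv (f x))"
  by (induction A rule: infinite_finite_induct) (simp_all add: pderiv_add)

lemma W_nonneg:
  assumes E2: "\<forall>e\<in>E. \<exists>x y. x \<noteq> y \<and> e = {x,y}" and fin: "finite S" and u: "u \<in> S"
  shows "poly (eta w w1 (S - {u}) E * pderiv (eta w w1 S E) - eta w w1 S E * pderiv (eta w w1 (S - {u}) E)) x \<ge> 0"
  using fin u
proof (induction "card S" arbitrary: S u rule: less_induct)
  case less
  define q where "q = eta w w1 (S - {u}) E"
  define N where "N = {v\<in>S. {u,v}\<in>E}"
  define c where "c = (\<lambda>v. (cmod (w {u,v}))^2)"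
  define s where "s = (\<lambda>v. eta w w1 (S - {u} - {v}) E)"
  define L where "L = [:- w1 u, 1:]"
  have notu: "\<And>v. {u,v} \<in> E \<Longrightarrow> v \<noteq> u"
    using E2 by (metis doubleton_eq_iff insert_absorb2)
  have rec: "eta w w1 S E = L * q - (\<Sum>v\<in>N. smult (c v) (s v))"
    using eta_rec[OF E2 less.prems] by (simp add: q_def N_def L_def c_def s_def)
  have pL: "pderiv L = 1" by (simp add: L_def pderiv_pCons)
  have prec: "pderiv (eta w w1 S E) = q + L * pderiv q - (\<Sum>v\<in>N. smult (c v) (pderiv (s v)))"
    unfolding rec by (simp add: pderiv_diff pderiv_sum' pderiv_smult pderiv_mult pL)
  define W where "W = (\<lambda>v. s v * pderiv q - q * pderiv (s v))"
  have id: "q * pderiv (eta w w1 S E) - eta w w1 S E * pderiv q = q * q + (\<Sum>v\<in>N. smult (c v) (W v))"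
  proof -
    have "(\<Sum>v\<in>N. smult (c v) (W v)) = (\<Sum>v\<in>N. smult (c v) (s v)) * pderiv q - q * (\<Sum>v\<in>N. smult (c v) (pderiv (s v)))"
      by (simp add: W_def sum_distrib_left sum_distrib_right smult_diff_right sum_subtractf mult_smult_left mult_smult_right)
    moreover have "q * pderiv (eta w w1 S E) - eta w w1 S E * pderiv q =
       q * (q + L * pderiv q - (\<Sum>v\<in>N. smult (c v) (pderiv (s v)))) - (L * q - (\<Sum>v\<in>N. smult (c v) (s v))) * pderiv q"
      unfolding prec by (simp only: rec)
    ultimately show ?thesis by (simp add: algebra_simps)
  qed
  have Wn: "\<And>v. v \<in> N \<Longrightarrow> poly (W v) x \<ge> 0"
  proof -
    fix v assume v: "v \<in> N"
    then have vS: "v \<in> S - {u}" using notu by (auto simp: N_def)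
    have "card (S - {u}) < card S" using card_Diff1_less[OF less.prems] .
    then show "poly (W v) x \<ge> 0"
      using less.hyps[of "S - {u}" v] vS less.prems by (simp add: W_def s_def q_def)
  qed
  have "poly (q * pderiv (eta w w1 S E) - eta w w1 S E * pderiv q) x = (poly q x)^2 + (\<Sum>v\<in>N. c v * poly (W v) x)"
    unfolding id by (simp add: poly_sum power2_eq_square)
  also have "\<dots> \<ge> 0" using Wn by (intro add_nonneg_nonneg sum_nonneg mult_nonneg_nonneg) (auto simp: c_def)
  finally show ?case by (simp add: q_def)
qed

lemma ord_diff:
  fixes f g :: "real poly"
  assumes lt: "order a f < order a g" and f0: "f \<noteq> 0"
  shows "order a (f - g) = order a f \<and> f - g \<noteq> 0"
proof -
  define n where "n = order a f"
  have fg: "f - g \<noteq> 0" using lt by auto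
  have d1: "[:-a,1:]^n dvd f" using order_divides f0 n_def by blast
  have d2: "[:-a,1:]^n dvd g" using order_divides lt n_def by (metis less_imp_le)
  have "[:-a,1:]^n dvd f - g" using d1 d2 by (rule dvd_diff)
  then have ge: "n \<le> order a (f - g)" using order_divides fg by blast
  have "\<not> Suc n \<le> order a (f - g)"
  proof
    assume "Suc n \<le> order a (f - g)"
    then have "[:-a,1:]^Suc n dvd f - g" using order_divides by blast
    moreover have "[:-a,1:]^Suc n dvd g" using order_divides lt n_def by (metis Suc_leI)
    ultimately have "[:-a,1:]^Suc n dvd (f - g) + g" by (rule dvd_add)
    then have "[:-a,1:]^Suc n dvd f" by (metis diff_add_cancel)
    then have "Suc n \<le> order a f" using order_divides f0 by blast
    then show False using n_def by simp
  qed
  then show ?thesis using ge fg n_def by simp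
qed

lemma ord_diff2:
  fixes f g :: "real poly"
  assumes lt: "order a g < order a f" and g0: "g \<noteq> 0"
  shows "order a (f - g) = order a g \<and> f - g \<noteq> 0"
proof -
  have "order a (g - f) = order a g \<and> g - f \<noteq> 0" by (rule ord_diff[OF lt g0])
  moreover have "f - g = smult (-1) (g - f)" by simp
  ultimately show ?thesis using order_smult[of "-1::real" a "g - f"] by simp
qed

lemma poly_nonneg_limit:
  fixes h :: "real poly"
  assumes "\<forall>x. x \<noteq> t \<longrightarrow> poly h x \<ge> 0"
  shows "poly h t \<ge> 0"
proof (rule tendsto_lowerbound)
  show "((\<lambda>x. poly h x) \<longlongrightarrow> poly h t) (at t)"
    using poly_isCont isCont_def by blast
  show "\<forall>\<^sub>F x in at t. 0 \<le> poly h x" using assms by (auto simp: eventually_at_filter)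
  show "at t \<noteq> (bot :: real filter)" by simp
qed

lemma eta_del:
  "eta w w1 (V - {v}) (del_edges E v) = eta w w1 (V - {v}) E"
proof -
  have "\<And>T. T \<in> Pow (V - {v}) \<Longrightarrow> induced_edges (del_edges E v) T = induced_edges E T"
    by (auto simp: induced_edges_def del_edges_def)
  then show ?thesis unfolding eta_def by (intro sum.cong refl) simp
qed


theorem lemma5p8:
  fixes V :: "'a set" and E :: "'a set set"
    and w :: "'a set \<Rightarrow> complex" and w1 :: "'a \<Rightarrow> real" and \<theta> :: real and u :: 'a
  assumes "simple_graph V E"
    and "\<forall>e\<in>E. w e \<noteq> 0"
    and "special w w1 \<theta> V E u"
  shows "degree E u \<ge> 2"
proof (rule ccontr)
  assume nd: "\<not> 2 \<le> degree E u"
  have finV: "finite V" and E2': "\<forall>e\<in>E. \<exists>x y. x \<noteq> y \<and> x \<in> V \<and> y \<in> V \<and> e = {x,y}"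
    using assms(1) by (auto simp: simple_graph_def)
  have E2: "\<forall>e\<in>E. \<exists>x y. x \<noteq> y \<and> e = {x,y}" using E2' by blast
  have EV: "E \<subseteq> Pow V" using E2' by auto
  have finE: "finite E" using finV EV finite_subset by blast
  obtain v where uV: "u \<in> V" and nu: "\<not> essential w w1 \<theta> V E u" and uvE: "{u,v} \<in> E"
      and ev: "essential w w1 \<theta> V E v"
    using assms(3) by (auto simp: special_def)
  have notu: "\<And>x. {u,x} \<in> E \<Longrightarrow> x \<noteq> u"
    using E2 by (metis doubleton_eq_iff insert_absorb2)
  have vu: "v \<noteq> u" using notu uvE by blast
  have vV: "v \<in> V" using ev by (simp add: essential_def)
  define D where "D = {e\<in>E. u \<in> e}"
  have finD: "finite D" using finE by (simp add: D_def)
  have uvD: "{u,v} \<in> D" using uvE by (simp add: D_def)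
  have "card D \<le> Suc 0" using nd by (simp add: degree_def D_def)
  then have Donly: "\<forall>e\<in>E. u \<in> e \<longrightarrow> e = {u,v}"
    using card_le_Suc0_iff_eq[OF finD] uvD by (auto simp: D_def)
  have Nv: "{x\<in>V. {u,x}\<in>E} = {v}"
  proof
    show "{x\<in>V. {u,x}\<in>E} \<subseteq> {v}"
    proof
      fix x assume x: "x \<in> {x\<in>V. {u,x}\<in>E}"
      then have "{u,x} = {u,v}" using Donly by auto
      then show "x \<in> {v}" using vu by (auto simp: doubleton_eq_iff)
    qed
    show "{v} \<subseteq> {x\<in>V. {u,x}\<in>E}" using vV uvE by auto
  qed
  have Nv2: "{x\<in>V - {v}. {u,x}\<in>E} = {}" using Nv by auto
  define p where "p = eta w w1 V E"
  define q where "q = eta w w1 (V - {u}) E"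
  define r where "r = eta w w1 (V - {v}) E"
  define s where "s = eta w w1 (V - {u} - {v}) E"
  define c where "c = (cmod (w {u,v}))^2"
  define L where "L = [:- w1 u, 1:]"
  have er1: "eta w w1 V E = [:- w1 u, 1:] * eta w w1 (V - {u}) E
     - (\<Sum>v\<in>{v\<in>V. {u,v}\<in>E}. smult ((cmod (w {u,v}))^2) (eta w w1 (V - {u} - {v}) E))"
    by (rule eta_rec[OF E2 finV uV])
  have recp: "p = L * q - smult c s"
    using er1 Nv by (simp add: p_def q_def s_def c_def L_def)
  have uVv: "u \<in> V - {v}" using uV vu by simp
  have VV: "V - {v} - {u} = V - {u} - {v}" by auto
  have er2: "eta w w1 (V - {v}) E = [:- w1 u, 1:] * eta w w1 (V - {v} - {u}) E
     - (\<Sum>x\<in>{x\<in>V - {v}. {u,x}\<in>E}. smult ((cmod (w {u,x}))^2) (eta w w1 (V - {v} - {u} - {x}) E))"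
    by (rule eta_rec[OF E2 _ uVv]) (use finV in simp)
  have recr: "r = L * s"
    using er2 unfolding Nv2 VV by (simp add: r_def s_def L_def)
  have p0: "p \<noteq> 0" using eta_nonzero[OF E2] finV by (simp add: p_def)
  have q0: "q \<noteq> 0" using eta_nonzero[OF E2] finV by (simp add: q_def)
  have r0: "r \<noteq> 0" using eta_nonzero[OF E2] finV by (simp add: r_def)
  have s0: "s \<noteq> 0" using eta_nonzero[OF E2] finV by (simp add: s_def)
  have L0: "L \<noteq> 0" by (simp add: L_def)
  have cpos: "c > 0" using assms(2) uvE by (simp add: c_def)
  have evr: "int (order \<theta> r) = int (order \<theta> p) - 1"
    using ev by (simp add: essential_def mult_def del_vertices_def eta_del r_def p_def)
  have nuq: "int (order \<theta> q) \<noteq> int (order \<theta> p) - 1"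
    using nu uV by (simp add: essential_def mult_def del_vertices_def eta_del q_def p_def)
  define m where "m = order \<theta> p"
  define k where "k = order \<theta> q"
  define j where "j = order \<theta> s"
  have ordr: "order \<theta> r = order \<theta> L + j" using order_mult[of L s \<theta>] recr r0 by (simp add: j_def)
  have ordcs: "order \<theta> (smult c s) = j" using order_smult[of c \<theta> s] cpos by (simp add: j_def)
  have Lq0: "L * q \<noteq> 0" using L0 q0 by simp
  have ordLq: "order \<theta> (L * q) = order \<theta> L + k" using order_mult[OF Lq0] by (simp add: k_def)
  have cs0: "smult c s \<noteq> 0" using cpos s0 by simp
  show False
  proof (cases "\<theta> = w1 u")
    case False
    have "poly L \<theta> \<noteq> 0" using False by (simp add: L_def)
    then have oL: "order \<theta> L = 0" by (rule order_0I)
    have jm: "int j = int m - 1" using evr ordr oL by (simp add: m_def)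
    have kj: "k \<noteq> j" using nuq jm by (simp add: k_def m_def)
    show False
    proof (cases "k < j")
      case True
      then have "order \<theta> (L * q - smult c s) = order \<theta> (L * q)"
        using ord_diff[of \<theta> "L * q" "smult c s"] ordLq oL ordcs Lq0 by simp
      then have "m = k" using recp ordLq oL by (simp add: m_def)
      then show False using True jm by simp
    next
      case False
      then have "j < k" using kj by simp
      then have "order \<theta> (L * q - smult c s) = order \<theta> (smult c s)"
        using ord_diff2[of \<theta> "smult c s" "L * q"] ordLq oL ordcs cs0 by simp
      then have "m = j" using recp ordcs by (simp add: m_def)
      then show False using jm by simp
    qed
  next
    case True
    define y where "y = [:-\<theta>, 1:]"
    have Ly: "L = y" using True by (simp add: L_def y_def)
    have oL: "order \<theta> L = 1" using order_power_n_n[of \<theta> 1] by (simp add: Ly y_def)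
    have jm: "int j + 1 = int m - 1" using evr ordr oL by (simp add: m_def)
    have kj: "k + 1 = j"
    proof (rule ccontr)
      assume ne: "k + 1 \<noteq> j"
      show False
      proof (cases "k + 1 < j")
        case True
        then have "order \<theta> (L * q - smult c s) = order \<theta> (L * q)"
          using ord_diff[of \<theta> "L * q" "smult c s"] ordLq oL ordcs Lq0 by simp
        then have "m = k + 1" using recp ordLq oL by (simp add: m_def)
        then show False using True jm by simp
      next
        case False
        then have "j < k + 1" using ne by simp
        then have "order \<theta> (L * q - smult c s) = order \<theta> (smult c s)"
          using ord_diff2[of \<theta> "smult c s" "L * q"] ordLq oL ordcs cs0 by simp
        then have "m = j" using recp ordcs by (simp add: m_def)
        then show False using jm by simp
      qed
    qed
    have mk: "m = k + 3" using jm kj by simp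
    obtain q1 where q1: "q = y ^ k * q1" and q1n: "\<not> y dvd q1"
      using order_decomp[OF q0, of \<theta>] by (auto simp: k_def y_def)
    obtain s1 where s1: "s = y ^ j * s1" and s1n: "\<not> y dvd s1"
      using order_decomp[OF s0, of \<theta>] by (auto simp: j_def y_def)
    define Q where "Q = y ^ k"
    have qQ: "q = Q * q1" using q1 by (simp add: Q_def)
    have "s = y ^ Suc k * s1" using s1 kj by simp
    then have sQ: "s = y * Q * s1" by (simp add: Q_def)
    have py: "pderiv y = 1" by (simp add: y_def pderiv_pCons)
    define h where "h = y * (s1 * pderiv q1 - q1 * pderiv s1) - q1 * s1"
    have Wid: "s * pderiv q - q * pderiv s = Q * Q * h"
      unfolding qQ sQ h_def by (simp add: pderiv_mult py algebra_simps)
    have vH: "v \<in> V - {u}" using vV vu by simp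
    have Wnn: "\<And>x. poly (s * pderiv q - q * pderiv s) x \<ge> 0"
    proof -
      fix x
      have "poly (eta w w1 (V - {u} - {v}) E * pderiv (eta w w1 (V - {u}) E) - eta w w1 (V - {u}) E * pderiv (eta w w1 (V - {u} - {v}) E)) x \<ge> 0"
        by (rule W_nonneg[OF E2 _ vH]) (use finV in simp)
      then show "poly (s * pderiv q - q * pderiv s) x \<ge> 0" by (simp add: s_def q_def)
    qed
    have hpos: "\<forall>x. x \<noteq> \<theta> \<longrightarrow> poly h x \<ge> 0"
    proof (intro allI impI)
      fix x assume x: "x \<noteq> \<theta>"
      have "poly Q x = (x - \<theta>)^k" by (simp add: Q_def y_def)
      then have "poly Q x \<noteq> 0" using x by simp
      then have pos: "poly Q x * poly Q x > 0" by (auto simp: zero_less_mult_iff linorder_neq_iff)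
      have "0 \<le> poly Q x * poly Q x * poly h x" using Wnn[of x] unfolding Wid by simp
      then show "poly h x \<ge> 0" using pos by (simp add: zero_le_mult_iff)
    qed
    have h0: "poly h \<theta> \<ge> 0" by (rule poly_nonneg_limit[OF hpos])
    have pyQ: "p = y * Q * (q1 - smult c s1)"
      using recp qQ sQ Ly by (simp add: algebra_simps)
    have d1: "y ^ Suc (Suc k) dvd p" using order_divides[of \<theta> "Suc (Suc k)" p] mk by (simp add: m_def y_def)
    have d2: "y ^ Suc (Suc k) = (y * Q) * y" by (simp add: Q_def algebra_simps)
    have "(y * Q) * y dvd (y * Q) * (q1 - smult c s1)" using d1 unfolding d2 pyQ by simp
    moreover have "y * Q \<noteq> 0"
    proof -
      have yn: "y \<noteq> 0" by (simp add: y_def)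
      then show ?thesis by (simp add: Q_def del: mult_pCons_left)
    qed
    ultimately have "y dvd q1 - smult c s1" by simp
    then have "poly (q1 - smult c s1) \<theta> = 0" using poly_eq_0_iff_dvd[of "q1 - smult c s1" \<theta>] by (simp add: y_def)
    then have qs: "poly q1 \<theta> = c * poly s1 \<theta>" by simp
    have s1t: "poly s1 \<theta> \<noteq> 0" using s1n poly_eq_0_iff_dvd[of s1 \<theta>] by (simp add: y_def)
    have "poly h \<theta> = - (poly q1 \<theta> * poly s1 \<theta>)" by (simp add: h_def y_def)
    also have "\<dots> = - (c * (poly s1 \<theta>)^2)" using qs by (simp add: power2_eq_square)
    also have "\<dots> < 0" using cpos s1t by simp
    finally show False using h0 by simp
  qed
qed

end
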